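(* Let $\kappa$ be an infinite cardinal and let $(\mathbf{Z}_\kappa,\Sigma)$ be a ring of Euclidean integers for $\kappa$. Then there exist a fine ultrafilter $\mathcal{U}$ on $\kappa$ and an isomorphism of ordered rings $\sigma:\mathbf{Z}_\kappa\to\mathbb{Z}^\kappa/\mathcal{U}$ (the ultrapower of $\mathbb{Z}$ modulo $\mathcal{U}$) such that $\sigma(\Sigma(\mathbf{x}))=[\mathbf{f}_{\mathbf{x}}]_{\mathcal{U}}$ for every $\mathbf{x}\in\mathbb{Z}^\kappa$, where $[\cdot]_{\mathcal U}$ denotes the class modulo $\mathcal U$. Equivalently, $\Sigma(\mathbf{x})\le\Sigma(\mathbf{y})$ iff $\{\delta<\kappa\mid \mathbf{f}_{\mathbf{x}}(\delta)\le\mathbf{f}_{\mathbf{y}}(\delta)\}\in\mathcal{U}$.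
   Context: Every ordinal $\alpha$ has a unique base-2 normal form $\alpha=2^{\alpha_1}+\dots+2^{\alpha_n}$ with $\alpha_1>\dots>\alpha_n$; put $L_\alpha=\{\alpha_1,\dots,\alpha_n\}$. Formal inclusion: $\alpha\sqsubseteq\beta$ iff $L_\alpha\subseteq L_\beta$, $\alpha\sqsubset\beta$ iff $L_\alpha\subsetneq L_\beta$. $\alpha\vee\beta$ is the ordinal $\gamma$ with $L_\gamma=L_\alpha\cup L_\beta$. For $\theta<\kappa$ the cone is $C(\theta)=\{\alpha<\kappa\mid\theta\sqsubset\alpha\}$; a filter on $\kappa$ is fine if it contains all cones. For $\mathbf{x}\in\mathbb{Z}^\kappa$, $\mathbf{f}_{\mathbf{x}}(\alpha)=\sum_{\beta\sqsubseteq\alpha}x_\beta$. A ring of Euclidean integers for $\kappa$ is a discretely ordered commutative integral domain $\mathbf{Z}_\kappa$ containing $\mathbb{Z}$ as an ordered subring, together with a map $\Sigma:\mathbb{Z}^\kappa\to\mathbf{Z}_\kappa$, written $\Sigma(\mathbf{x})=\sum_\alpha x_\alpha$, such that: (0) if only finitely many $x_\alpha\neq0$ then $\sum_\alpha x_\alpha$ is the ordinary finite sum; (RA) every element of $\mathbf{Z}_\kappa$ is $\sum_\alpha x_\alpha$ for some $\mathbf{x}\in\mathbb{Z}^\kappa$; (LA) $u\sum_\alpha x_\alpha+v\sum_\alpha y_\alpha=\sum_\alpha(ux_\alpha+vy_\alpha)$ for all $u,v\in\mathbb{Z}$, $\mathbf{x},\mathbf{y}\in\mathbb{Z}^\kappa$;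 (CA) if there is $\theta<\kappa$ with $\mathbf{f}_{\mathbf{x}}(\delta)\le\mathbf{f}_{\mathbf{y}}(\delta)$ for all $\delta<\kappa$ with $\theta\sqsubseteq\delta$, then $\sum_\alpha x_\alpha\le\sum_\alpha y_\alpha$; (PA) $(\sum_\alpha x_\alpha)(\sum_\beta y_\beta)=\sum_\gamma z_\gamma$ where $z_\gamma=\sum_{\alpha\vee\beta=\gamma}x_\alpha y_\beta$. *)

theory Defs
  imports Main "HOL-Library.FSet"
begin

text \<open>Indices: an ordinal \<alpha> below the infinite cardinal \<kappa> is represented by its
  finite exponent set L_\<alpha> (base-2 normal form), i.e. by an element of 'a fset,
  where the infinite type 'a has cardinality \<kappa>.  Formal inclusion is fset inclusion,
  \<alpha> \<or> \<beta> is fset union.\<close>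

definition fsum :: "('a fset \<Rightarrow> int) \<Rightarrow> 'a fset \<Rightarrow> int" where
  "fsum x \<alpha> = (\<Sum>\<beta>\<in>{\<beta>. \<beta> |\<subseteq>| \<alpha>}. x \<beta>)"

definition conv_prod :: "('a fset \<Rightarrow> int) \<Rightarrow> ('a fset \<Rightarrow> int) \<Rightarrow> 'a fset \<Rightarrow> int" where
  "conv_prod x y \<gamma> = (\<Sum>p\<in>{(\<alpha>,\<beta>). \<alpha> |\<union>| \<beta> = \<gamma>}. x (fst p) * y (snd p))"

definition euclidean_integers :: "(('a fset \<Rightarrow> int) \<Rightarrow> 'z::linordered_idom) \<Rightarrow> bool" where
  "euclidean_integers S \<longleftrightarrow>
     (\<forall>z::'z. \<not> (0 < z \<and> z < 1)) \<and>
     (\<forall>x. finite {\<alpha>. x \<alpha> \<noteq> 0} \<longrightarrow> S x = of_int (\<Sum>\<alpha>\<in>{\<alpha>. x \<alpha> \<noteq> 0}. x \<alpha>)) \<and>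
     surj S \<and>
     (\<forall>u v x y. of_int u * S x + of_int v * S y = S (\<lambda>\<alpha>. u * x \<alpha> + v * y \<alpha>)) \<and>
     (\<forall>x y. (\<exists>\<theta>. \<forall>\<delta>. \<theta> |\<subseteq>| \<delta> \<longrightarrow> fsum x \<delta> \<le> fsum y \<delta>) \<longrightarrow> S x \<le> S y) \<and>
     (\<forall>x y. S x * S y = S (conv_prod x y))"

definition is_ultrafilter :: "'b filter \<Rightarrow> bool" where
  "is_ultrafilter F \<longleftrightarrow> F \<noteq> bot \<and> (\<forall>P. eventually P F \<or> eventually (\<lambda>i. \<not> P i) F)"

definition fine :: "'a fset filter \<Rightarrow> bool" where
  "fine F \<longleftrightarrow> (\<forall>\<theta>. eventually (\<lambda>\<alpha>. \<theta> |\<subset>| \<alpha>) F)"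

definition uequiv :: "'b filter \<Rightarrow> (('b \<Rightarrow> int) \<times> ('b \<Rightarrow> int)) set" where
  "uequiv U = {(f, g). eventually (\<lambda>i. f i = g i) U}"

definition uclass :: "'b filter \<Rightarrow> ('b \<Rightarrow> int) \<Rightarrow> ('b \<Rightarrow> int) set" where
  "uclass U f = uequiv U `` {f}"

definition ultrapower :: "'b filter \<Rightarrow> ('b \<Rightarrow> int) set set" where
  "ultrapower U = UNIV // uequiv U"

definition up_add :: "'b filter \<Rightarrow> ('b \<Rightarrow> int) set \<Rightarrow> ('b \<Rightarrow> int) set \<Rightarrow> ('b \<Rightarrow> int) set" where
  "up_add U A B = (\<Union>f\<in>A. \<Union>g\<in>B. uclass U (\<lambda>i. f i + g i))"

definition up_mult :: "'b filter \<Rightarrow> ('b \<Rightarrow> int) set \<Rightarrow> ('b \<Rightarrow> int) set \<Rightarrow> ('b \<Rightarrow> int) set" where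
  "up_mult U A B = (\<Union>f\<in>A. \<Union>g\<in>B. uclass U (\<lambda>i. f i * g i))"

definition up_le :: "'b filter \<Rightarrow> ('b \<Rightarrow> int) set \<Rightarrow> ('b \<Rightarrow> int) set \<Rightarrow> bool" where
  "up_le U A B \<longleftrightarrow> (\<exists>f\<in>A. \<exists>g\<in>B. eventually (\<lambda>i. f i \<le> g i) U)"

end

theory Submission imports Defs begin

lemma fin_sub: "finite {\<beta>. \<beta> |\<subseteq>| (\<alpha>::'a fset)}"
proof -
  have "{\<beta>. \<beta> |\<subseteq>| \<alpha>} = fset (fPow \<alpha>)" by auto
  thus ?thesis by simp
qed

lemma fin_psub: "finite {\<beta>. \<beta> |\<subset>| (\<alpha>::'a fset)}"
  by (rule finite_subset[OF _ fin_sub[of \<alpha>]]) auto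

function mob :: "('a fset \<Rightarrow> int) \<Rightarrow> 'a fset \<Rightarrow> int" where
  "mob f \<alpha> = f \<alpha> - (\<Sum>\<beta>\<in>{\<beta>. \<beta> |\<subset>| \<alpha>}. mob f \<beta>)"
  by auto
termination
  by (relation "measure (\<lambda>(f, \<alpha>). fcard \<alpha>)") (auto intro: pfsubset_fcard_mono)

declare mob.simps[simp del]

lemma fsum_mob: "fsum (mob f) = (f :: 'a fset \<Rightarrow> int)"
proof
  fix \<alpha> :: "'a fset"
  have "{\<beta>. \<beta> |\<subseteq>| \<alpha>} = insert \<alpha> {\<beta>. \<beta> |\<subset>| \<alpha>}" by auto
  then show "fsum (mob f) \<alpha> = f \<alpha>"
    unfolding fsum_def using fin_psub[of \<alpha>] by (simp add: mob.simps[of f \<alpha>])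
qed

lemma fsum_conv: "fsum (conv_prod x y) \<delta> = fsum x \<delta> * fsum y \<delta>"
proof -
  let ?P = "{\<beta>. \<beta> |\<subseteq>| \<delta>} \<times> {\<beta>. \<beta> |\<subseteq>| \<delta>}"
  have fP: "finite ?P" using fin_sub by auto
  have "fsum x \<delta> * fsum y \<delta> = (\<Sum>p\<in>?P. x (fst p) * y (snd p))"
    unfolding fsum_def sum_product sum.cartesian_product by (simp add: case_prod_beta)
  also have "\<dots> = (\<Sum>\<gamma>\<in>{\<beta>. \<beta> |\<subseteq>| \<delta>}. \<Sum>p\<in>{p. p \<in> ?P \<and> fst p |\<union>| snd p = \<gamma>}. x (fst p) * y (snd p))"
    by (rule sum.group[symmetric, OF fP fin_sub]) auto
  also have "\<dots> = fsum (conv_prod x y) \<delta>"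
    unfolding fsum_def conv_prod_def
    by (rule sum.cong[OF refl], rule sum.cong) (auto simp: case_prod_beta)
  finally show ?thesis by simp
qed

theorem theorem1p2:
  fixes S :: "('a fset \<Rightarrow> int) \<Rightarrow> 'z::linordered_idom"
  assumes "infinite (UNIV :: 'a set)"
    and "euclidean_integers S"
  shows "\<exists>U \<sigma>. is_ultrafilter U \<and> fine U \<and>
           bij_betw \<sigma> (UNIV :: 'z set) (ultrapower U) \<and>
           (\<forall>a b. \<sigma> (a + b) = up_add U (\<sigma> a) (\<sigma> b)) \<and>
           (\<forall>a b. \<sigma> (a * b) = up_mult U (\<sigma> a) (\<sigma> b)) \<and>
           (\<forall>a b. a \<le> b \<longleftrightarrow> up_le U (\<sigma> a) (\<sigma> b)) \<and>
           (\<forall>x. \<sigma> (S x) = uclass U (fsum x))"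
proof -
  note E = assms(2)[unfolded euclidean_integers_def]
  have fin0: "\<And>x. finite {\<alpha>. x \<alpha> \<noteq> 0} \<Longrightarrow> S x = of_int (\<Sum>\<alpha>\<in>{\<alpha>. x \<alpha> \<noteq> 0}. x \<alpha>)" using E[THEN conjunct2, THEN conjunct1] by blast
  have surjS: "surj S" using E[THEN conjunct2, THEN conjunct2, THEN conjunct1] by blast
  have LA: "\<And>u v x y. of_int u * S x + of_int v * S y = S (\<lambda>\<alpha>. u * x \<alpha> + v * y \<alpha>)" using E[THEN conjunct2, THEN conjunct2, THEN conjunct2, THEN conjunct1] by blast
  have CA: "\<And>x y. (\<exists>\<theta>. \<forall>\<delta>. \<theta> |\<subseteq>| \<delta> \<longrightarrow> fsum x \<delta> \<le> fsum y \<delta>) \<Longrightarrow> S x \<le> S y" using E[THEN conjunct2, THEN conjunct2, THEN conjunct2, THEN conjunct2, THEN conjunct1] by blast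
  have PA: "\<And>x y. S x * S y = S (conv_prod x y)" using E[THEN conjunct2, THEN conjunct2, THEN conjunct2, THEN conjunct2, THEN conjunct2] by blast
  define T where "T f = S (mob f)" for f
  have mono0: "S x \<le> S y" if "\<And>\<delta>. fsum x \<delta> \<le> fsum y \<delta>" for x y
    using that by (intro CA) blast
  have Seq: "S x = S y" if "fsum x = fsum y" for x y
    using mono0[of x y] mono0[of y x] that by (simp add: order.antisym)
  have TS: "T (fsum x) = S x" for x unfolding T_def by (rule Seq) (simp add: fsum_mob)
  have Tmono: "T f \<le> T g" if "\<And>i. f i \<le> g i" for f g
    unfolding T_def by (rule mono0) (simp add: fsum_mob that)
  have fsum_lin: "fsum (\<lambda>\<alpha>. u * x \<alpha> + v * y \<alpha>) = (\<lambda>\<delta>. u * fsum x \<delta> + v * fsum y \<delta>)" for u v x y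
    by (auto simp: fsum_def sum.distrib sum_distrib_left)
  have Tlin: "T (\<lambda>i. u * f i + v * g i) = of_int u * T f + of_int v * T g" for u v f g
  proof -
    have "of_int u * T f + of_int v * T g = S (\<lambda>\<alpha>. u * mob f \<alpha> + v * mob g \<alpha>)" unfolding T_def by (rule LA)
    also have "\<dots> = T (fsum (\<lambda>\<alpha>. u * mob f \<alpha> + v * mob g \<alpha>))" by (rule TS[symmetric])
    also have "\<dots> = T (\<lambda>i. u * f i + v * g i)" by (simp add: fsum_lin fsum_mob)
    finally show ?thesis by simp
  qed
  have Tadd: "T (\<lambda>i. f i + g i) = T f + T g" for f g using Tlin[of 1 f 1 g] by simp
  have Tdiff: "T (\<lambda>i. f i - g i) = T f - T g" for f g using Tlin[of 1 f "-1" g] by simp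
  have Tmult: "T (\<lambda>i. f i * g i) = T f * T g" for f g
  proof -
    have "T f * T g = S (conv_prod (mob f) (mob g))" unfolding T_def by (rule PA)
    also have "\<dots> = T (fsum (conv_prod (mob f) (mob g)))" by (rule TS[symmetric])
    also have "fsum (conv_prod (mob f) (mob g)) = (\<lambda>i. f i * g i)" by (simp add: fun_eq_iff fsum_conv fsum_mob)
    finally show ?thesis by simp
  qed
  have Tconst: "T (\<lambda>_. c) = of_int c" for c
  proof -
    define x :: "'a fset \<Rightarrow> int" where "x = (\<lambda>\<alpha>. if \<alpha> = {||} then c else 0)"
    have "fsum x = (\<lambda>_. c)" by (auto simp: fun_eq_iff fsum_def x_def sum.delta[OF fin_sub])
    hence "T (\<lambda>_. c) = S x" using TS by metis
    also have "S x = of_int c"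
    proof (cases "c = 0")
      case True
      hence "{\<alpha>. x \<alpha> \<noteq> 0} = {}" by (auto simp: x_def)
      thus ?thesis using fin0[of x] True by simp
    next
      case False
      hence "{\<alpha>. x \<alpha> \<noteq> 0} = {{||}}" by (auto simp: x_def)
      thus ?thesis using fin0[of x] by (simp add: x_def)
    qed
    finally show ?thesis .
  qed
  define e where "e P = T (\<lambda>i. if P i then 1 else 0)" for P
  have e01: "e P = 0 \<or> e P = 1" for P
  proof -
    have "e P * e P = e P" unfolding e_def Tmult[symmetric] by (rule arg_cong[where f=T]) auto
    hence "e P * (e P - 1) = 0" by (simp add: algebra_simps)
    thus ?thesis by simp
  qed
  have ecompl: "e P + e (\<lambda>i. \<not> P i) = 1" for P
  proof -
    have "e P + e (\<lambda>i. \<not> P i) = T (\<lambda>_. 1)" unfolding e_def Tadd[symmetric]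
      by (rule arg_cong[where f=T]) auto
    thus ?thesis using Tconst[of 1] by simp
  qed
  have eTrue: "e (\<lambda>_. True) = 1" using Tconst[of 1] by (simp add: e_def)
  have eFalse: "e (\<lambda>_. False) = 0" using Tconst[of 0] by (simp add: e_def)
  have eMono: "e Q = 1" if "\<forall>x. P x \<longrightarrow> Q x" "e P = 1" for P Q
  proof -
    have "e P \<le> e Q" unfolding e_def by (rule Tmono) (use that in auto)
    thus ?thesis using e01[of Q] that by auto
  qed
  have eConj: "e (\<lambda>x. P x \<and> Q x) = e P * e Q" for P Q
    unfolding e_def Tmult[symmetric] by (rule arg_cong[where f=T]) auto
  have isf: "is_filter (\<lambda>P. e P = 1)"
    by (rule is_filter.intro) (auto simp: eTrue eConj intro: eMono)
  define U where "U = Abs_filter (\<lambda>P. e P = 1)"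
  have ev: "eventually P U \<longleftrightarrow> e P = 1" for P
    unfolding U_def by (rule eventually_Abs_filter[OF isf])
  have L0: "T h = T (\<lambda>i. if P i then h i else 0)" if "e P = 1" for P h
  proof -
    have "T (\<lambda>i. if P i then h i else 0) = T (\<lambda>i. h i * (if P i then 1 else 0))"
      by (rule arg_cong[where f=T]) auto
    also have "\<dots> = T h" using that by (simp add: Tmult e_def)
    finally show ?thesis by simp
  qed
  have Tle_iff: "T f \<le> T g \<longleftrightarrow> eventually (\<lambda>i. f i \<le> g i) U" for f g
  proof
    assume "eventually (\<lambda>i. f i \<le> g i) U"
    hence P: "e (\<lambda>i. f i \<le> g i) = 1" using ev by simp
    have "T (\<lambda>_. 0) \<le> T (\<lambda>i. if f i \<le> g i then g i - f i else 0)"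
      by (rule Tmono) auto
    also have "\<dots> = T (\<lambda>i. g i - f i)" using L0[OF P] by simp
    finally show "T f \<le> T g" using Tconst[of 0] Tdiff by simp
  next
    assume le: "T f \<le> T g"
    show "eventually (\<lambda>i. f i \<le> g i) U"
    proof (rule ccontr)
      assume "\<not> ?thesis"
      hence "e (\<lambda>i. f i \<le> g i) \<noteq> 1" using ev by simp
      hence P: "e (\<lambda>i. \<not> f i \<le> g i) = 1" using e01 ecompl by (metis add_0)
      have "1 = T (\<lambda>i. if \<not> f i \<le> g i then 1 else 0)" using P by (simp add: e_def)
      also have "\<dots> \<le> T (\<lambda>i. if \<not> f i \<le> g i then f i - g i else 0)"
        by (rule Tmono) auto
      also have "\<dots> = T (\<lambda>i. f i - g i)" using L0[OF P] by simp
      finally have "1 \<le> T f - T g" using Tdiff by simp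
      thus False using le by simp
    qed
  qed
  have Teq_iff: "T f = T g \<longleftrightarrow> eventually (\<lambda>i. f i = g i) U" for f g
  proof
    assume "T f = T g"
    hence "eventually (\<lambda>i. f i \<le> g i) U" "eventually (\<lambda>i. g i \<le> f i) U"
      using Tle_iff[of f g] Tle_iff[of g f] by simp_all
    hence "eventually (\<lambda>i. f i \<le> g i \<and> g i \<le> f i) U" by (rule eventually_conj)
    thus "eventually (\<lambda>i. f i = g i) U" by (rule eventually_mono) auto
  next
    assume H: "eventually (\<lambda>i. f i = g i) U"
    have "eventually (\<lambda>i. f i \<le> g i) U" "eventually (\<lambda>i. g i \<le> f i) U"
      by (rule eventually_mono[OF H], simp)+
    thus "T f = T g" using Tle_iff by (meson order.antisym)
  qed
  have surjT: "\<exists>f. T f = z" for z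
  proof -
    obtain x where "z = S x" using surjS by blast
    thus ?thesis using TS by metis
  qed
  have ucl: "uclass U g = {f. T f = T g}" for g
  proof (rule set_eqI)
    fix f
    have "f \<in> uclass U g \<longleftrightarrow> eventually (\<lambda>i. g i = f i) U" by (simp add: uclass_def uequiv_def)
    also have "\<dots> \<longleftrightarrow> T g = T f" by (rule Teq_iff[symmetric])
    finally show "f \<in> uclass U g \<longleftrightarrow> f \<in> {f. T f = T g}" by auto
  qed
  define \<sigma> where "\<sigma> z = {f. T f = z}" for z
  have sig_cls: "\<sigma> (T f) = uclass U f" for f by (auto simp: ucl \<sigma>_def)
  have UF: "is_ultrafilter U"
    unfolding is_ultrafilter_def
  proof
    show "U \<noteq> bot"
    proof
      assume "U = bot"
      hence "eventually (\<lambda>_. False) U" by simp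
      thus False using ev eFalse by simp
    qed
    show "\<forall>P. eventually P U \<or> eventually (\<lambda>i. \<not> P i) U"
      using ev e01 ecompl by (metis add_0)
  qed
  have FI: "fine U"
    unfolding fine_def
  proof
    fix \<theta> :: "'a fset"
    obtain a where a: "a \<notin> fset \<theta>" using ex_new_if_finite[OF assms(1) finite_fset] by blast
    have "T (\<lambda>_. 1) \<le> T (\<lambda>\<alpha>. if \<theta> |\<subset>| \<alpha> then 1 else 0)"
      unfolding T_def
    proof (rule CA, rule exI[of _ "finsert a \<theta>"], intro allI impI)
      fix \<delta> assume "finsert a \<theta> |\<subseteq>| \<delta>"
      hence "\<theta> |\<subset>| \<delta>" using a by (metis finsert_absorb finsert_fsubset less_le)
      thus "fsum (mob (\<lambda>_. 1)) \<delta> \<le> fsum (mob (\<lambda>\<alpha>. if \<theta> |\<subset>| \<alpha> then 1 else 0)) \<delta>"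
        by (simp add: fsum_mob)
    qed
    hence "1 \<le> e (\<lambda>\<alpha>. \<theta> |\<subset>| \<alpha>)" using Tconst[of 1] unfolding e_def by simp
    hence "e (\<lambda>\<alpha>. \<theta> |\<subset>| \<alpha>) = 1" using e01[of "\<lambda>\<alpha>. \<theta> |\<subset>| \<alpha>"] by auto
    thus "eventually (\<lambda>\<alpha>. \<theta> |\<subset>| \<alpha>) U" using ev by simp
  qed
  have upw: "ultrapower U = range (uclass U)"
    unfolding ultrapower_def quotient_def uclass_def by auto
  have BIJ: "bij_betw \<sigma> UNIV (ultrapower U)"
    unfolding bij_betw_def
  proof
    show "inj \<sigma>"
    proof (rule injI)
      fix a b assume "\<sigma> a = \<sigma> b"
      obtain f where "T f = a" using surjT by blast
      thus "a = b" using \<open>\<sigma> a = \<sigma> b\<close> unfolding \<sigma>_def by blast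
    qed
    show "range \<sigma> = ultrapower U"
      unfolding upw
    proof safe
      fix z obtain f where "T f = z" using surjT by blast
      thus "\<sigma> z \<in> range (uclass U)" using sig_cls by auto
    next
      fix f show "uclass U f \<in> range \<sigma>" using sig_cls[of f] by (metis rangeI)
    qed
  qed
  have ADD: "\<sigma> (a + b) = up_add U (\<sigma> a) (\<sigma> b)" for a b
  proof -
    obtain f0 g0 where f0: "T f0 = a" and g0: "T g0 = b" using surjT by metis
    show ?thesis
      unfolding up_add_def
    proof (rule set_eqI, rule iffI)
      fix h assume "h \<in> \<sigma> (a + b)"
      hence "h \<in> uclass U (\<lambda>i. f0 i + g0 i)" by (simp add: ucl \<sigma>_def Tadd f0 g0)
      moreover have "f0 \<in> \<sigma> a" "g0 \<in> \<sigma> b" by (simp_all add: \<sigma>_def f0 g0)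
      ultimately show "h \<in> (\<Union>f\<in>\<sigma> a. \<Union>g\<in>\<sigma> b. uclass U (\<lambda>i. f i + g i))" by blast
    next
      fix h assume "h \<in> (\<Union>f\<in>\<sigma> a. \<Union>g\<in>\<sigma> b. uclass U (\<lambda>i. f i + g i))"
      then obtain f g where "f \<in> \<sigma> a" "g \<in> \<sigma> b" "h \<in> uclass U (\<lambda>i. f i + g i)" by blast
      thus "h \<in> \<sigma> (a + b)" by (simp add: ucl \<sigma>_def Tadd)
    qed
  qed
  have MULT: "\<sigma> (a * b) = up_mult U (\<sigma> a) (\<sigma> b)" for a b
  proof -
    obtain f0 g0 where f0: "T f0 = a" and g0: "T g0 = b" using surjT by metis
    show ?thesis
      unfolding up_mult_def
    proof (rule set_eqI, rule iffI)
      fix h assume "h \<in> \<sigma> (a * b)"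
      hence "h \<in> uclass U (\<lambda>i. f0 i * g0 i)" by (simp add: ucl \<sigma>_def Tmult f0 g0)
      moreover have "f0 \<in> \<sigma> a" "g0 \<in> \<sigma> b" by (simp_all add: \<sigma>_def f0 g0)
      ultimately show "h \<in> (\<Union>f\<in>\<sigma> a. \<Union>g\<in>\<sigma> b. uclass U (\<lambda>i. f i * g i))" by blast
    next
      fix h assume "h \<in> (\<Union>f\<in>\<sigma> a. \<Union>g\<in>\<sigma> b. uclass U (\<lambda>i. f i * g i))"
      then obtain f g where "f \<in> \<sigma> a" "g \<in> \<sigma> b" "h \<in> uclass U (\<lambda>i. f i * g i)" by blast
      thus "h \<in> \<sigma> (a * b)" by (simp add: ucl \<sigma>_def Tmult)
    qed
  qed
  have LE: "a \<le> b \<longleftrightarrow> up_le U (\<sigma> a) (\<sigma> b)" for a b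
  proof -
    obtain f0 g0 where f0: "T f0 = a" and g0: "T g0 = b" using surjT by metis
    show ?thesis
      unfolding up_le_def
    proof
      assume "a \<le> b"
      hence "eventually (\<lambda>i. f0 i \<le> g0 i) U" using Tle_iff[of f0 g0] f0 g0 by simp
      moreover have "f0 \<in> \<sigma> a" "g0 \<in> \<sigma> b" by (simp_all add: \<sigma>_def f0 g0)
      ultimately show "\<exists>f\<in>\<sigma> a. \<exists>g\<in>\<sigma> b. eventually (\<lambda>i. f i \<le> g i) U" by blast
    next
      assume "\<exists>f\<in>\<sigma> a. \<exists>g\<in>\<sigma> b. eventually (\<lambda>i. f i \<le> g i) U"
      then obtain f g where "f \<in> \<sigma> a" "g \<in> \<sigma> b" "eventually (\<lambda>i. f i \<le> g i) U" by blast
      thus "a \<le> b" using Tle_iff[of f g] by (simp add: \<sigma>_def)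
    qed
  qed
  have CL: "\<sigma> (S x) = uclass U (fsum x)" for x
    using sig_cls[of "fsum x"] TS by simp
  show ?thesis
    by (rule exI[of _ U], rule exI[of _ \<sigma>]) (use UF FI BIJ ADD MULT LE CL in blast)
qed

end
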